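(* There exists a constant $C\ge1$ depending only on $\mathbf A$ such that for every $B\in\mathbf B_{\mathrm o}$ and every $A\in\mathbf S$ there exist $c>0$, $t\in\mathbb R$ and $M\in\mathbf B_{\mathrm o}$ whose rows span $A^*V_B$ such that $\varphi_{BA}(x)=c\,\varphi_M(x)+t$ for all $x\in\mathbb R^2_{>0}$, and $$C^{-1}\frac{\|A^*u_{A,B}\|}{\|A^*r_{B,2}\|}\le c\le C\frac{\|A^*u_{A,B}\|}{\|A^*r_{B,2}\|}.$$
   Context: $\mathbf A\subset\mathrm{SL}(3,\mathbb R)_{>0}$ is finite (determinant one, positive entries) and $\mathbf S$ is the semigroup it generates. For $M\in\mathrm{Mat}_{2,3}(\mathbb R)$ with rows $r_{M,1},r_{M,2}$ and $x\in\mathbb R^2$, $\tilde x=(x_1,x_2,1)$ and $\varphi_M(x)=\langle r_{M,1},\tilde x\rangle/\langle r_{M,2},\tilde x\rangle$. $\mathbf B_{\mathrm o}$ is the set of $2\times3$ real matrices with orthonormal rows whose second row has nonnegative coordinates; $V_B$ is the row span of $B$. $A^*$ is the transpose. $u_{A,B}$ is the unique (up to sign) unit vector in $V_B$ with $A^*u_{A,B}\perp A^*r_{B,2}$. *)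

theory Defs
  imports "HOL-Analysis.Analysis"
begin

text \<open>3x3 real matrices are real^3^3; 2x3 real matrices are real^3^2 (row i is M $ i).\<close>

definition SL3pos :: "(real^3^3) set" where
  "SL3pos = {A. det A = 1 \<and> (\<forall>i j. A $ i $ j > 0)}"

inductive_set gen_semigroup :: "(real^3^3) set \<Rightarrow> (real^3^3) set" for G where
  gen: "A \<in> G \<Longrightarrow> A \<in> gen_semigroup G"
| mult: "A \<in> gen_semigroup G \<Longrightarrow> A' \<in> gen_semigroup G \<Longrightarrow> A ** A' \<in> gen_semigroup G"

definition tilde :: "real^2 \<Rightarrow> real^3" where
  "tilde x = vector [x $ 1, x $ 2, 1]"

definition phi :: "real^3^2 \<Rightarrow> real^2 \<Rightarrow> real" where
  "phi M x = ((M $ 1) \<bullet> tilde x) / ((M $ 2) \<bullet> tilde x)"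

definition Bo :: "(real^3^2) set" where
  "Bo = {B. norm (B $ 1) = 1 \<and> norm (B $ 2) = 1 \<and> (B $ 1) \<bullet> (B $ 2) = 0
            \<and> (\<forall>j. B $ 2 $ j \<ge> 0)}"

definition VB :: "real^3^2 \<Rightarrow> (real^3) set" where
  "VB B = span {B $ 1, B $ 2}"

text \<open>u_{A,B}: a unit vector in V_B with A^* u orthogonal to A^* r_{B,2} (unique up to sign).\<close>
definition uAB :: "real^3^3 \<Rightarrow> real^3^2 \<Rightarrow> real^3" where
  "uAB A B = (SOME u. u \<in> VB B \<and> norm u = 1 \<and>
                 (transpose A *v u) \<bullet> (transpose A *v (B $ 2)) = 0)"

end

theory Submission
  imports Defs
begin

lemma mv_scaleR: "(A::real^'n^'m) *v (c *\<^sub>R x) = c *\<^sub>R (A *v x)"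
  by (simp add: vec_eq_iff matrix_vector_mult_def sum_distrib_left algebra_simps)

lemma row_prod: "((B::real^3^2) ** (A::real^3^3)) $ i = transpose A *v (B $ i)"
  by (simp add: vec_eq_iff matrix_matrix_mult_def matrix_vector_mult_def transpose_def mult.commute)

lemma tv_comp: "(transpose (A::real^3^3) *v x) $ j = (\<Sum>i\<in>UNIV. A $ i $ j * x $ i)"
  by (simp add: matrix_vector_mult_def transpose_def)

lemma inj_det:
  fixes A :: "real^3^3"
  assumes "det A \<noteq> 0" "A *v x = 0"
  shows "x = 0"
proof -
  from assms(1) have "invertible A" by (simp add: invertible_det_nz)
  then obtain A' where "A' ** A = mat 1" unfolding invertible_def by blast
  then have "x = (A' ** A) *v x" by simp
  also have "\<dots> = A' *v (A *v x)" by (simp add: matrix_vector_mul_assoc)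
  finally show ?thesis using assms(2) by simp
qed

lemma SL3pos_mult: "A \<in> SL3pos \<Longrightarrow> A' \<in> SL3pos \<Longrightarrow> A ** A' \<in> SL3pos"
proof -
  assume a: "A \<in> SL3pos" "A' \<in> SL3pos"
  have "det (A ** A') = 1" using a unfolding SL3pos_def by (simp add: det_mul)
  moreover have "\<forall>i j. (A ** A') $ i $ j > 0" using a unfolding SL3pos_def
    by (auto simp: matrix_matrix_mult_def intro!: sum_pos mult_pos_pos)
  ultimately show ?thesis unfolding SL3pos_def by simp
qed

lemma semigroup_props:
  assumes "A \<in> gen_semigroup As" "As \<subseteq> SL3pos"
  shows "A \<in> SL3pos \<and> (\<exists>G\<in>As. \<exists>X. (\<forall>i j. X$i$j \<ge> 0) \<and> A = G ** X)
     \<and> (\<exists>H\<in>As. \<exists>Y. (\<forall>i j. Y$i$j \<ge> 0) \<and> A = Y ** H)"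
  using assms(1)
proof (induction rule: gen_semigroup.induct)
  case (gen A)
  have "A = A ** mat 1" "A = mat 1 ** A" by simp_all
  moreover have "\<forall>i j. (mat 1 :: real^3^3) $i$j \<ge> 0" by (simp add: mat_def)
  ultimately show ?case using gen assms(2) by blast
next
  case (mult A A')
  then obtain G X where G: "G \<in> As" "\<forall>i j. X$i$j \<ge> 0" "A = G ** X" by blast
  from mult obtain H Y where H: "H \<in> As" "\<forall>i j. Y$i$j \<ge> 0" "A' = Y ** H" by blast
  have pA: "\<forall>i j. A$i$j \<ge> 0" "\<forall>i j. A'$i$j \<ge> 0" using mult unfolding SL3pos_def by (auto intro: less_imp_le)
  have "A ** A' = G ** (X ** A')" using G by (simp add: matrix_mul_assoc)
  moreover have "\<forall>i j. (X ** A')$i$j \<ge> 0" using G(2) pA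
    by (auto simp: matrix_matrix_mult_def intro!: sum_nonneg mult_nonneg_nonneg )
  moreover have "A ** A' = (A ** Y) ** H" using H by (simp add: matrix_mul_assoc)
  moreover have "\<forall>i j. (A ** Y)$i$j \<ge> 0" using H(2) pA
    by (auto simp: matrix_matrix_mult_def intro!: sum_nonneg mult_nonneg_nonneg )
  ultimately show ?case using mult SL3pos_mult G(1) H(1) by blast
qed

lemma ratio_bound:
  assumes "A \<in> gen_semigroup As" "As \<subseteq> SL3pos" "\<rho> \<ge> 1"
    and rho: "\<forall>G\<in>As. \<forall>i p k q. G$i$p \<le> \<rho> * G$k$q"
  shows "A$i$j \<le> \<rho>\<^sup>2 * A$k$l"
proof -
  from semigroup_props[OF assms(1,2)] obtain G X H Y where
    G: "G \<in> As" "\<forall>i j. X$i$j \<ge> 0" "A = G ** X" and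
    H: "H \<in> As" "\<forall>i j. Y$i$j \<ge> 0" "A = Y ** H" by blast
  have "A$i$j = (\<Sum>p\<in>UNIV. G$i$p * X$p$j)" using G(3) by (simp add: matrix_matrix_mult_def)
  also have "\<dots> \<le> (\<Sum>p\<in>UNIV. (\<rho> * G$k$p) * X$p$j)"
    by (rule sum_mono, rule mult_right_mono) (use rho G in auto)
  also have "\<dots> = \<rho> * A$k$j" using G(3) by (simp add: matrix_matrix_mult_def sum_distrib_left mult.assoc)
  finally have 1: "A$i$j \<le> \<rho> * A$k$j" .
  have "A$k$j = (\<Sum>p\<in>UNIV. Y$k$p * H$p$j)" using H(3) by (simp add: matrix_matrix_mult_def)
  also have "\<dots> \<le> (\<Sum>p\<in>UNIV. Y$k$p * (\<rho> * H$p$l))"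
    by (rule sum_mono, rule mult_left_mono) (use rho H in auto)
  also have "\<dots> = \<rho> * A$k$l" using H(3) by (simp add: matrix_matrix_mult_def sum_distrib_left algebra_simps)
  finally have 2: "A$k$j \<le> \<rho> * A$k$l" .
  have "\<rho> * A$k$j \<le> \<rho> * (\<rho> * A$k$l)" using 2 assms(3) by (simp add: mult_left_mono)
  with 1 show ?thesis by (simp add: power2_eq_square mult.assoc)
qed

lemma rho_exists:
  assumes "finite As" "As \<subseteq> SL3pos"
  shows "\<exists>\<rho>::real. \<rho> \<ge> 1 \<and> (\<forall>G\<in>As. \<forall>i p k q. G$i$p \<le> \<rho> * G$k$q)"
proof -
  define S where "S = As \<times> (UNIV::3 set) \<times> (UNIV::3 set) \<times> (UNIV::3 set) \<times> (UNIV::3 set)"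
  define f where "f = (\<lambda>(G::real^3^3,i::3,p::3,k::3,q::3). G$i$p / G$k$q)"
  define \<rho> where "\<rho> = 1 + sum f S"
  have fin: "finite S" using assms(1) by (simp add: S_def)
  have pos: "\<And>G i p. G \<in> As \<Longrightarrow> G$i$p > 0" using assms(2) unfolding SL3pos_def by auto
  have nn: "\<forall>s\<in>S. f s \<ge> 0" using pos by (auto simp: S_def f_def intro!: divide_nonneg_pos less_imp_le)
  have "\<rho> \<ge> 1" unfolding \<rho>_def using sum_nonneg[of S f] nn by auto
  moreover have "G$i$p \<le> \<rho> * G$k$q" if "G \<in> As" for G i p k q
  proof -
    have "(G,i,p,k,q) \<in> S" using that by (simp add: S_def)
    then have "f (G,i,p,k,q) \<le> sum f S" using member_le_sum[OF _ _ fin] nn by blast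
    then have "G$i$p / G$k$q \<le> \<rho>" by (simp add: f_def \<rho>_def)
    then show ?thesis using pos[OF that, of k q] by (simp add: divide_le_eq)
  qed
  ultimately show ?thesis by blast
qed

declare transpose_matrix_vector[simp del]

lemma main_step:
  fixes A :: "real^3^3" and B :: "real^3^2" and K :: real
  assumes AS: "A \<in> SL3pos" and BB: "B \<in> Bo" and K1: "K \<ge> 1"
    and rat: "\<And>i j k l. A$i$j \<le> K * A$k$l"
  shows "\<exists>c::real. \<exists>t::real. \<exists>M \<in> Bo. c > 0 \<and>
         span {M $ 1, M $ 2} = (\<lambda>v. transpose A *v v) ` VB B \<and>
         (\<forall>x::real^2. x $ 1 > 0 \<and> x $ 2 > 0 \<longrightarrow> phi (B ** A) x = c * phi M x + t) \<and>
         (1 / (1 + 9 * K\<^sup>2)) * (norm (transpose A *v uAB A B) / norm (transpose A *v (B $ 2))) \<le> c \<and>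
         c \<le> (1 + 9 * K\<^sup>2) * (norm (transpose A *v uAB A B) / norm (transpose A *v (B $ 2)))"
proof -
  define r1 where "r1 = B $ 1"
  define r2 where "r2 = B $ 2"
  define v where "v = transpose A *v r1"
  define w where "w = transpose A *v r2"
  define C where "C = 1 + 9 * K\<^sup>2"
  have nr1: "norm r1 = 1" and nr2: "norm r2 = 1" and o12: "r1 \<bullet> r2 = 0" and r2nn: "\<And>j. r2 $ j \<ge> 0"
    using BB unfolding Bo_def r1_def r2_def by auto
  have r11: "r1 \<bullet> r1 = 1" using nr1 by (simp add: norm_eq_sqrt_inner)
  have r22: "r2 \<bullet> r2 = 1" using nr2 by (simp add: norm_eq_sqrt_inner)
  have Apos: "\<And>i j. A$i$j > 0" and detA: "det A = 1" using AS unfolding SL3pos_def by auto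
  define e where "e = A$1$1"
  have e0: "e > 0" using Apos by (simp add: e_def)
  have Alow: "e / K \<le> A$i$j" for i j using rat[of 1 1 i j] K1 by (simp add: e_def divide_le_eq mult.commute)
  have Aup: "A$i$j \<le> K * e" for i j using rat[of i j 1 1] by (simp add: e_def)
  have sum_r2: "(\<Sum>i\<in>UNIV. r2 $ i) \<ge> 1"
  proof -
    have "r2 $ i \<le> 1" for i using component_le_norm_cart[of r2 i] nr2 by simp
    then have "(r2 $ i) * (r2 $ i) \<le> r2 $ i" for i using r2nn[of i] by (simp add: mult_left_le)
    then have "(\<Sum>i\<in>UNIV. r2 $ i * r2 $ i) \<le> (\<Sum>i\<in>UNIV. r2 $ i)" by (rule sum_mono)
    moreover have "(\<Sum>i\<in>UNIV. r2 $ i * r2 $ i) = 1" using r22 by (simp add: inner_vec_def)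
    ultimately show ?thesis by simp
  qed
  have wlow: "w $ j \<ge> e / K" for j
  proof -
    have "(e / K) * 1 \<le> (e / K) * (\<Sum>i\<in>UNIV. r2 $ i)"
      by (rule mult_left_mono) (use sum_r2 e0 K1 in auto)
    then have "e / K \<le> (e / K) * (\<Sum>i\<in>UNIV. r2 $ i)" by simp
    also have "\<dots> = (\<Sum>i\<in>UNIV. (e / K) * r2 $ i)" by (simp add: sum_distrib_left)
    also have "\<dots> \<le> (\<Sum>i\<in>UNIV. A $ i $ j * r2 $ i)"
      by (rule sum_mono, rule mult_right_mono) (use Alow r2nn in auto)
    also have "\<dots> = w $ j" by (simp only: w_def tv_comp)
    finally show ?thesis .
  qed
  have wpos: "w $ j > 0" for j using wlow[of j] e0 K1 by (smt (verit) divide_pos_pos)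
  have nwlow: "norm w \<ge> e / K" using wlow[of 1] component_le_norm_cart[of w 1] by simp
  have w0: "norm w > 0" using nwlow e0 K1 by (smt (verit) divide_pos_pos)
  have vup: "norm v \<le> 9 * K * e"
  proof -
    have r1b: "\<bar>r1 $ i\<bar> \<le> 1" for i using component_le_norm_cart[of r1 i] nr1 by simp
    have "\<bar>v $ j\<bar> \<le> 3 * K * e" for j
    proof -
      have "\<bar>v $ j\<bar> = \<bar>\<Sum>i\<in>UNIV. A $ i $ j * r1 $ i\<bar>" by (simp only: v_def tv_comp)
      also have "\<dots> \<le> (\<Sum>i\<in>UNIV. \<bar>A $ i $ j * r1 $ i\<bar>)" by (rule sum_abs)
      also have "\<dots> \<le> (\<Sum>i\<in>(UNIV::3 set). K * e)"
      proof (rule sum_mono)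
        fix i
        have "\<bar>A $ i $ j * r1 $ i\<bar> = A $ i $ j * \<bar>r1 $ i\<bar>" using Apos[of i j] by (simp add: abs_mult)
        also have "\<dots> \<le> K * e * 1" using Aup[of i j] r1b[of i] Apos[of i j]
          by (intro mult_mono) auto
        finally show "\<bar>A $ i $ j * r1 $ i\<bar> \<le> K * e" by simp
      qed
      also have "\<dots> = 3 * K * e" by simp
      finally show ?thesis .
    qed
    then have "(\<Sum>j\<in>UNIV. \<bar>v $ j\<bar>) \<le> (\<Sum>j\<in>(UNIV::3 set). 3 * K * e)" by (intro sum_mono) auto
    then show ?thesis using norm_le_l1_cart[of v] by simp
  qed
  define R where "R = (v \<bullet> w) / (norm w)\<^sup>2"
  have Rb: "\<bar>R\<bar> \<le> 9 * K\<^sup>2"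
  proof -
    have "\<bar>R\<bar> = \<bar>v \<bullet> w\<bar> / (norm w)\<^sup>2" by (simp add: R_def abs_divide)
    also have "\<dots> \<le> norm v * norm w / (norm w)\<^sup>2"
      by (rule divide_right_mono) (auto simp: Cauchy_Schwarz_ineq2)
    also have "\<dots> = norm v / norm w" using w0 by (simp add: power2_eq_square)
    also have "\<dots> \<le> (9 * K * e) / (e / K)"
      using vup nwlow w0 e0 K1 by (intro frac_le) auto
    also have "\<dots> = 9 * K\<^sup>2" using e0 K1 by (simp add: power2_eq_square)
    finally show ?thesis .
  qed
  define p where "p = v - R *\<^sub>R w"
  have ww: "w \<bullet> w = (norm w)\<^sup>2" by (simp add: power2_norm_eq_inner)
  have pw: "p \<bullet> w = 0" using w0 by (simp add: p_def R_def inner_diff_left ww)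
  have p0: "p \<noteq> 0"
  proof
    assume "p = 0"
    then have "transpose A *v (r1 - R *\<^sub>R r2) = 0"
      by (simp add: p_def v_def w_def matrix_vector_mult_diff_distrib mv_scaleR)
    moreover have "det (transpose A) \<noteq> 0" using detA by (simp add: det_transpose)
    ultimately have "r1 - R *\<^sub>R r2 = 0" using inj_det by blast
    then have "r1 = R *\<^sub>R r2" by simp
    then have "r1 \<bullet> r1 = R * (r2 \<bullet> r1)" by simp
    also have "\<dots> = 0" using o12 by (simp add: inner_commute)
    finally show False using r11 by simp
  qed
  have np0: "norm p > 0" using p0 by simp
  define m1 where "m1 = (1 / norm p) *\<^sub>R p"
  define m2 where "m2 = (1 / norm w) *\<^sub>R w"
  define M :: "real^3^2" where "M = (\<chi> i. if i = 1 then m1 else m2)"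
  have M1: "M $ 1 = m1" and M2: "M $ 2 = m2" by (simp_all add: M_def)
  have MB: "M \<in> Bo"
    unfolding Bo_def using np0 w0 wpos pw
    by (auto simp: M1 M2 m1_def m2_def less_imp_le)
  define c where "c = norm p / norm w"
  have c0: "c > 0" using np0 w0 by (simp add: c_def)
  have spaneq: "span {M $ 1, M $ 2} = (\<lambda>v. transpose A *v v) ` VB B"
  proof -
    have lin: "linear (\<lambda>v. transpose A *v v)" by (rule matrix_vector_mul_linear)
    have "(\<lambda>v. transpose A *v v) ` VB B = span {v, w}"
      unfolding VB_def span_linear_image[OF lin, symmetric] by (simp add: v_def w_def r1_def r2_def)
    moreover have "span {m1, m2} = span {v, w}"
    proof (rule span_eq[THEN iffD2], rule conjI)
      have "v \<in> span {v, w}" "w \<in> span {v, w}" by (simp_all add: span_base)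
      then show "{m1, m2} \<subseteq> span {v, w}"
        by (simp add: m1_def m2_def p_def span_scale span_diff)
      have "v = norm p *\<^sub>R m1 + (R * norm w) *\<^sub>R m2" using np0 w0 by (simp add: m1_def m2_def p_def)
      moreover have "m1 \<in> span {m1, m2}" "m2 \<in> span {m1, m2}" by (simp_all add: span_base)
      ultimately have "v \<in> span {m1, m2}" by (metis span_add span_scale)
      moreover have "w = norm w *\<^sub>R m2" using w0 by (simp add: m2_def)
      then have "w \<in> span {m1, m2}" using \<open>m2 \<in> span {m1, m2}\<close> by (metis span_scale)
      ultimately show "{v, w} \<subseteq> span {m1, m2}" by auto
    qed
    ultimately show ?thesis by (simp add: M1 M2)
  qed
  have phieq: "phi (B ** A) x = c * phi M x + R" if "x $ 1 > 0" "x $ 2 > 0" for x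
  proof -
    define s where "s = w \<bullet> tilde x"
    have s0: "s > 0" using that wpos
      by (simp add: s_def tilde_def inner_vec_def sum_3 add_pos_pos)
    have vv: "v = p + R *\<^sub>R w" by (simp add: p_def)
    have "phi (B ** A) x = (v \<bullet> tilde x) / s"
      by (simp add: phi_def row_prod v_def w_def r1_def r2_def s_def)
    also have "\<dots> = (p \<bullet> tilde x + R * s) / s" by (simp add: vv inner_add_left s_def)
    finally have 1: "phi (B ** A) x = (p \<bullet> tilde x + R * s) / s" .
    have 2: "phi M x = ((p \<bullet> tilde x) / norm p) / (s / norm w)"
      by (simp add: phi_def M1 M2 m1_def m2_def s_def)
    show ?thesis using s0 np0 w0 unfolding 1 2 c_def by (simp add: field_simps)
  qed
  define u0 where "u0 = (norm w)\<^sup>2 *\<^sub>R r1 - (v \<bullet> w) *\<^sub>R r2"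
  have "u0 \<bullet> r1 = (norm w)\<^sup>2" using r11 o12 by (simp add: u0_def inner_diff_left inner_commute[of r2 r1])
  then have u00: "u0 \<noteq> 0" using w0 by auto
  have "\<exists>u. u \<in> VB B \<and> norm u = 1 \<and> (transpose A *v u) \<bullet> (transpose A *v (B $ 2)) = 0"
  proof (intro exI conjI)
    show "(1 / norm u0) *\<^sub>R u0 \<in> VB B"
      unfolding VB_def u0_def r1_def r2_def by (intro span_mul span_diff span_base) auto
    show "norm ((1 / norm u0) *\<^sub>R u0) = 1" using u00 by simp
    have "transpose A *v u0 = (norm w)\<^sup>2 *\<^sub>R v - (v \<bullet> w) *\<^sub>R w"
      by (simp only: u0_def v_def w_def matrix_vector_mult_diff_distrib mv_scaleR)
    then have "(transpose A *v u0) \<bullet> w = 0"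
      by (simp add: inner_diff_left ww)
    then show "(transpose A *v ((1 / norm u0) *\<^sub>R u0)) \<bullet> (transpose A *v (B $ 2)) = 0"
      by (simp add: mv_scaleR w_def r2_def)
  qed
  then have uP: "uAB A B \<in> VB B" "norm (uAB A B) = 1" "(transpose A *v uAB A B) \<bullet> w = 0"
    unfolding uAB_def w_def r2_def by (metis (mono_tags, lifting) someI_ex)+
  define u where "u = uAB A B"
  obtain a b where uab: "u = a *\<^sub>R r1 + b *\<^sub>R r2"
  proof -
    from uP(1) obtain a where "u - a *\<^sub>R r1 \<in> span {r2}"
      unfolding VB_def u_def r1_def r2_def using span_breakdown_eq by blast
    then obtain b where "u - a *\<^sub>R r1 = b *\<^sub>R r2" by (auto simp: span_singleton)
    then show ?thesis using that[of a b] by (simp add: algebra_simps)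
  qed
  have ab1: "a\<^sup>2 + b\<^sup>2 = 1"
  proof -
    have "u \<bullet> u = 1" using uP(2) by (simp add: u_def norm_eq_sqrt_inner)
    then show ?thesis using r11 r22 o12
      by (simp add: uab inner_add_left inner_add_right inner_commute power2_eq_square)
  qed
  have Au: "transpose A *v u = a *\<^sub>R v + b *\<^sub>R w"
    by (simp add: uab matrix_vector_right_distrib mv_scaleR v_def w_def)
  have "(transpose A *v u) \<bullet> w = 0" using uP(3) by (simp only: u_def)
  then have "(a *\<^sub>R v + b *\<^sub>R w) \<bullet> w = 0" by (simp only: Au)
  then have "a * (v \<bullet> w) + b * (norm w)\<^sup>2 = 0" by (simp add: inner_add_left ww)
  then have bR: "b = - a * R" using w0 by (simp add: R_def field_simps)
  have Aup2: "transpose A *v u = a *\<^sub>R p" unfolding Au by (simp add: bR p_def algebra_simps)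
  have nAu: "norm (transpose A *v u) = \<bar>a\<bar> * norm p" unfolding Aup2 by simp
  have C1: "C \<ge> 1" by (simp add: C_def)
  have "a\<^sup>2 \<le> 1" using ab1 zero_le_power2[of b] by linarith
  then have a1: "\<bar>a\<bar> \<le> 1" by (simp add: abs_square_le_1)
  have Ca: "1 \<le> C * \<bar>a\<bar>"
  proof -
    have "1 = a\<^sup>2 * (1 + R\<^sup>2)" using ab1 by (simp add: bR power2_eq_square algebra_simps)
    also have "\<dots> \<le> a\<^sup>2 * (1 + \<bar>R\<bar>)\<^sup>2"
      by (rule mult_left_mono) (auto simp: power2_eq_square algebra_simps)
    also have "\<dots> \<le> a\<^sup>2 * C\<^sup>2"
      using Rb by (intro mult_left_mono power_mono) (auto simp: C_def)
    also have "\<dots> = (C * \<bar>a\<bar>)\<^sup>2" by (simp add: power2_eq_square)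
    finally have "1 \<le> (C * \<bar>a\<bar>)\<^sup>2" .
    moreover have "0 \<le> C * \<bar>a\<bar>" using C1 by simp
    ultimately show ?thesis using power2_le_imp_le[of 1 "C * \<bar>a\<bar>"] by simp
  qed
  have lo: "(1 / C) * (norm (transpose A *v u) / norm w) \<le> c"
  proof -
    have "\<bar>a\<bar> * norm p \<le> norm p" using a1 np0 by (simp add: mult_left_le_one_le)
    then have "norm (transpose A *v u) / norm w \<le> c" using w0
      unfolding nAu c_def by (simp add: divide_right_mono)
    moreover have "(1 / C) * (norm (transpose A *v u) / norm w) \<le> norm (transpose A *v u) / norm w"
    proof (rule mult_left_le_one_le)
      show "0 \<le> norm (transpose A *v u) / norm w" by simp
      show "0 \<le> 1 / C" using C1 by simp
      show "1 / C \<le> 1" using C1 by simp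
    qed
    ultimately show ?thesis by linarith
  qed
  have hi: "c \<le> C * (norm (transpose A *v u) / norm w)"
  proof -
    have "C * (norm (transpose A *v u) / norm w) = (C * \<bar>a\<bar>) * c" by (simp add: nAu c_def)
    moreover have "c \<le> (C * \<bar>a\<bar>) * c" using Ca c0 by (simp add: mult_le_cancel_right1)
    ultimately show ?thesis by simp
  qed
  show ?thesis
    apply (rule exI[of _ c], rule exI[of _ R], rule bexI[of _ M])
    using c0 spaneq phieq lo hi MB by (auto simp: u_def w_def r2_def C_def)
qed

theorem lemma3p2:
  fixes As :: "(real^3^3) set"
  assumes "finite As" and "As \<subseteq> SL3pos"
  shows "\<exists>C::real. C \<ge> 1 \<and>
    (\<forall>B \<in> Bo. \<forall>A \<in> gen_semigroup As.
       \<exists>c::real. \<exists>t::real. \<exists>M \<in> Bo. c > 0 \<and>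
         span {M $ 1, M $ 2} = (\<lambda>v. transpose A *v v) ` VB B \<and>
         (\<forall>x::real^2. x $ 1 > 0 \<and> x $ 2 > 0 \<longrightarrow> phi (B ** A) x = c * phi M x + t) \<and>
         (1 / C) * (norm (transpose A *v uAB A B) / norm (transpose A *v (B $ 2))) \<le> c \<and>
         c \<le> C * (norm (transpose A *v uAB A B) / norm (transpose A *v (B $ 2))))"
proof -
  obtain \<rho> :: real where r1: "\<rho> \<ge> 1" and rho: "\<forall>G\<in>As. \<forall>i p k q. G$i$p \<le> \<rho> * G$k$q"
    using rho_exists[OF assms] by blast
  define K where "K = \<rho>\<^sup>2"
  have K1: "K \<ge> 1" using r1 by (simp add: K_def one_le_power)
  show ?thesis
  proof (rule exI[of _ "1 + 9 * K\<^sup>2"], intro conjI ballI)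
    show "1 \<le> 1 + 9 * K\<^sup>2" by simp
    fix B A assume B: "B \<in> Bo" and A: "A \<in> gen_semigroup As"
    have AS: "A \<in> SL3pos" using semigroup_props[OF A assms(2)] by blast
    have rat: "\<And>i j k l. A$i$j \<le> K * A$k$l"
      unfolding K_def by (rule ratio_bound[OF A assms(2) r1 rho])
    show "\<exists>c::real. \<exists>t::real. \<exists>M \<in> Bo. c > 0 \<and>
         span {M $ 1, M $ 2} = (\<lambda>v. transpose A *v v) ` VB B \<and>
         (\<forall>x::real^2. x $ 1 > 0 \<and> x $ 2 > 0 \<longrightarrow> phi (B ** A) x = c * phi M x + t) \<and>
         (1 / (1 + 9 * K\<^sup>2)) * (norm (transpose A *v uAB A B) / norm (transpose A *v (B $ 2))) \<le> c \<and>
         c \<le> (1 + 9 * K\<^sup>2) * (norm (transpose A *v uAB A B) / norm (transpose A *v (B $ 2)))"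
      by (rule main_step[OF AS B K1 rat])
  qed
qed

end
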